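(* Let $\Gamma$ be a finite simplicial graph in which all equivalence classes are abelian. If $\Gamma$ has a SIL, then it has a special SIL.
   Context: $\mathrm{lk}(u)$ = neighbours of $u$, $\mathrm{st}(u)=\mathrm{lk}(u)\cup\{u\}$; $u\le v$ iff $\mathrm{lk}(u)\subseteq\mathrm{st}(v)$; $u\sim v$ iff $u\le v\le u$; class $[u]$; a class is abelian if its vertices are pairwise adjacent. A SIL is a triple $(x,y\mid z)$ of pairwise non-adjacent vertices such that the component of $\Gamma\setminus(\mathrm{lk}(x)\cap\mathrm{lk}(y))$ containing $z$ contains neither $x$ nor $y$. $\mathbb{A}_\Lambda$ is the right-angled Artin group of a graph $\Lambda$; for an induced subgraph it is identified with the subgroup generated by its vertices. $\mathrm{Out}^0(\mathbb{A}_\Lambda)$ is the subgroup of $\mathrm{Out}(\mathbb{A}_\Lambda)$ generated by transvections ($v\mapsto wv$ or $v\mapsto vw$ for $v\le w$, $v\neq w$) and partial conjugations ($z\mapsto vzv^{-1}$ for $z$ in a union of components of $\Lambda\setminus\mathrm{st}(v)$). For a SIL $S=(x_1,x_2\mid x_3)$, let $\Gamma_S$ be the subgraph induced on $[x_1]\cup[x_2]\cup[x_3]$ and $\Gamma_{\le S}$ the subgraph induced on $\{u: u\le x_i\text{ for some } i\}$. The epimorphism $\mathbb{A}_\Gamma\to\mathbb{A}_{\Gamma_{\le S}}$ killing all vertices outside $\Gamma_{\le S}$ induces a homomorphism $\mathrm{Fact}:\mathrm{Out}^0(\mathbb{A}_\Gamma)\to\mathrm{Out}^0(\mathbb{A}_{\Gamma_{\le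 S}})$. The SIL $S$ is special if each $[x_i]$ is abelian and every element of the image of $\mathrm{Fact}$ preserves the conjugacy class of the subgroup $\mathbb{A}_{\Gamma_S}$. *)

theory Defs
  imports "HOL-Algebra.Generated_Groups"
begin

definition simplicial_graph :: "'v set \<Rightarrow> ('v \<Rightarrow> 'v \<Rightarrow> bool) \<Rightarrow> bool" where
  "simplicial_graph V E \<longleftrightarrow>
     (\<forall>a b. E a b \<longrightarrow> a \<in> V \<and> b \<in> V) \<and>
     (\<forall>a b. E a b \<longrightarrow> E b a) \<and> (\<forall>a. \<not> E a a)"

definition lk :: "'v set \<Rightarrow> ('v \<Rightarrow> 'v \<Rightarrow> bool) \<Rightarrow> 'v \<Rightarrow> 'v set" where
  "lk V E u = {w \<in> V. E u w}"

definition st :: "'v set \<Rightarrow> ('v \<Rightarrow> 'v \<Rightarrow> bool) \<Rightarrow> 'v \<Rightarrow> 'v set" where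
  "st V E u = insert u (lk V E u)"

definition vle :: "'v set \<Rightarrow> ('v \<Rightarrow> 'v \<Rightarrow> bool) \<Rightarrow> 'v \<Rightarrow> 'v \<Rightarrow> bool" where
  "vle V E u v \<longleftrightarrow> u \<in> V \<and> v \<in> V \<and> lk V E u \<subseteq> st V E v"

definition vequiv :: "'v set \<Rightarrow> ('v \<Rightarrow> 'v \<Rightarrow> bool) \<Rightarrow> 'v \<Rightarrow> 'v \<Rightarrow> bool" where
  "vequiv V E u v \<longleftrightarrow> vle V E u v \<and> vle V E v u"

definition vclass :: "'v set \<Rightarrow> ('v \<Rightarrow> 'v \<Rightarrow> bool) \<Rightarrow> 'v \<Rightarrow> 'v set" where
  "vclass V E u = {v \<in> V. vequiv V E u v}"

definition abelian_set :: "('v \<Rightarrow> 'v \<Rightarrow> bool) \<Rightarrow> 'v set \<Rightarrow> bool" where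
  "abelian_set E C \<longleftrightarrow> (\<forall>a\<in>C. \<forall>b\<in>C. a \<noteq> b \<longrightarrow> E a b)"

definition conn_in :: "('v \<Rightarrow> 'v \<Rightarrow> bool) \<Rightarrow> 'v set \<Rightarrow> 'v \<Rightarrow> 'v \<Rightarrow> bool" where
  "conn_in E W a b \<longleftrightarrow> a \<in> W \<and> b \<in> W \<and>
     (a, b) \<in> {(p, q). p \<in> W \<and> q \<in> W \<and> E p q}\<^sup>*"

definition SIL :: "'v set \<Rightarrow> ('v \<Rightarrow> 'v \<Rightarrow> bool) \<Rightarrow> 'v \<Rightarrow> 'v \<Rightarrow> 'v \<Rightarrow> bool" where
  "SIL V E x y z \<longleftrightarrow>
     x \<in> V \<and> y \<in> V \<and> z \<in> V \<and> x \<noteq> y \<and> x \<noteq> z \<and> y \<noteq> z \<and>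
     \<not> E x y \<and> \<not> E x z \<and> \<not> E y z \<and>
     (let W = V - (lk V E x \<inter> lk V E y) in
        \<not> conn_in E W z x \<and> \<not> conn_in E W z y)"

text \<open>Words are lists of letters (vertex, sign); sign True = generator, False = inverse.\<close>

type_synonym 'v word = "('v \<times> bool) list"

definition inv_word :: "'v word \<Rightarrow> 'v word" where
  "inv_word w = rev (map (\<lambda>(a, b). (a, \<not> b)) w)"

definition raag_step :: "'v set \<Rightarrow> ('v \<Rightarrow> 'v \<Rightarrow> bool) \<Rightarrow> ('v word \<times> 'v word) set" where
  "raag_step V E =
     {(xs @ [(a, b), (a, \<not> b)] @ ys, xs @ ys) | xs ys a b. a \<in> V} \<union>
     {(xs @ [(a, b), (c, d)] @ ys, xs @ [(c, d), (a, b)] @ ys) | xs ys a b c d. E a c}"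

definition raag_eq :: "'v set \<Rightarrow> ('v \<Rightarrow> 'v \<Rightarrow> bool) \<Rightarrow> ('v word \<times> 'v word) set" where
  "raag_eq V E = (raag_step V E \<union> (raag_step V E)\<inverse>)\<^sup>*"

definition raag_cls :: "'v set \<Rightarrow> ('v \<Rightarrow> 'v \<Rightarrow> bool) \<Rightarrow> 'v word \<Rightarrow> 'v word set" where
  "raag_cls V E w = raag_eq V E `` {w}"

definition RAAG :: "'v set \<Rightarrow> ('v \<Rightarrow> 'v \<Rightarrow> bool) \<Rightarrow> 'v word set monoid" where
  "RAAG V E =
     \<lparr>carrier = {raag_cls V E w | w. set w \<subseteq> V \<times> UNIV},
      mult = (\<lambda>A B. {w. \<exists>a\<in>A. \<exists>b\<in>B. (a @ b, w) \<in> raag_eq V E}),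
      one = raag_cls V E []\<rparr>"

definition vgen :: "'v set \<Rightarrow> ('v \<Rightarrow> 'v \<Rightarrow> bool) \<Rightarrow> 'v \<Rightarrow> 'v word set" where
  "vgen V E u = raag_cls V E [(u, True)]"

definition special_subgroup :: "'v set \<Rightarrow> ('v \<Rightarrow> 'v \<Rightarrow> bool) \<Rightarrow> 'v set \<Rightarrow> 'v word set set" where
  "special_subgroup V E U = generate (RAAG V E) (vgen V E ` U)"

definition word_hom :: "('v \<Rightarrow> 'v word) \<Rightarrow> 'v word \<Rightarrow> 'v word" where
  "word_hom \<sigma> w = concat (map (\<lambda>(a, b). if b then \<sigma> a else inv_word (\<sigma> a)) w)"

definition hom_of :: "'v set \<Rightarrow> ('v \<Rightarrow> 'v \<Rightarrow> bool) \<Rightarrow> ('v \<Rightarrow> 'v word) \<Rightarrow> 'v word set \<Rightarrow> 'v word set" where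
  "hom_of V E \<sigma> A = {w'. \<exists>w\<in>A. (word_hom \<sigma> w, w') \<in> raag_eq V E}"

definition id_subst :: "'v \<Rightarrow> 'v word" where
  "id_subst u = [(u, True)]"

text \<open>Transvections v \<mapsto> w^e v and v \<mapsto> v w^e (v \<le> w, v \<noteq> w); the sign e allows the
  inverse transvections, so the monoid generated below is the group generated.\<close>
definition transvection :: "'v set \<Rightarrow> ('v \<Rightarrow> 'v \<Rightarrow> bool) \<Rightarrow> ('v \<Rightarrow> 'v word) \<Rightarrow> bool" where
  "transvection V E \<sigma> \<longleftrightarrow> (\<exists>v w e. vle V E v w \<and> v \<noteq> w \<and>
     (\<sigma> = id_subst(v := [(w, e), (v, True)]) \<or> \<sigma> = id_subst(v := [(v, True), (w, e)])))"

text \<open>Partial conjugations z \<mapsto> v^e z v^-e for z in a union C of components of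
  the graph minus st(v) (again e allows the inverses).\<close>
definition partial_conjugation :: "'v set \<Rightarrow> ('v \<Rightarrow> 'v \<Rightarrow> bool) \<Rightarrow> ('v \<Rightarrow> 'v word) \<Rightarrow> bool" where
  "partial_conjugation V E \<sigma> \<longleftrightarrow> (\<exists>v C e. v \<in> V \<and> C \<subseteq> V - st V E v \<and>
     (\<forall>p\<in>C. \<forall>q\<in>V - st V E v. E p q \<longrightarrow> q \<in> C) \<and>
     \<sigma> = (\<lambda>u. if u \<in> C then [(v, e), (u, True), (v, \<not> e)] else [(u, True)]))"

text \<open>Automorphisms (given by the images of the generators) in the subgroup of Aut
  generated by transvections and partial conjugations; its image in Out is Out^0.\<close>
inductive_set out0_subst :: "'v set \<Rightarrow> ('v \<Rightarrow> 'v \<Rightarrow> bool) \<Rightarrow> ('v \<Rightarrow> 'v word) set"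
  for V E where
    idI: "id_subst \<in> out0_subst V E"
  | genI: "\<tau> \<in> out0_subst V E \<Longrightarrow> transvection V E \<sigma> \<or> partial_conjugation V E \<sigma> \<Longrightarrow>
           (\<lambda>u. word_hom \<sigma> (\<tau> u)) \<in> out0_subst V E"

definition kill_outside :: "'v set \<Rightarrow> 'v \<Rightarrow> 'v word" where
  "kill_outside U u = (if u \<in> U then [(u, True)] else [])"

definition Gamma_S :: "'v set \<Rightarrow> ('v \<Rightarrow> 'v \<Rightarrow> bool) \<Rightarrow> 'v \<Rightarrow> 'v \<Rightarrow> 'v \<Rightarrow> 'v set" where
  "Gamma_S V E x1 x2 x3 = vclass V E x1 \<union> vclass V E x2 \<union> vclass V E x3"

definition Gamma_le_S :: "'v set \<Rightarrow> ('v \<Rightarrow> 'v \<Rightarrow> bool) \<Rightarrow> 'v \<Rightarrow> 'v \<Rightarrow> 'v \<Rightarrow> 'v set" where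
  "Gamma_le_S V E x1 x2 x3 = {u \<in> V. vle V E u x1 \<or> vle V E u x2 \<or> vle V E u x3}"

text \<open>Fact(f), for f represented by the automorphism \<tau>, is represented by the map
  \<pi> \<circ> f restricted to A_{\<Gamma>_{\<le>S}} (\<pi> the retraction killing vertices outside \<Gamma>_{\<le>S}).
  It preserves the conjugacy class of A_{\<Gamma>_S} iff it maps A_{\<Gamma>_S} onto a conjugate
  g A_{\<Gamma>_S} g^-1 with g in A_{\<Gamma>_{\<le>S}}. This is independent of the representative.\<close>
definition special_SIL :: "'v set \<Rightarrow> ('v \<Rightarrow> 'v \<Rightarrow> bool) \<Rightarrow> 'v \<Rightarrow> 'v \<Rightarrow> 'v \<Rightarrow> bool" where
  "special_SIL V E x1 x2 x3 \<longleftrightarrow>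
     SIL V E x1 x2 x3 \<and>
     abelian_set E (vclass V E x1) \<and> abelian_set E (vclass V E x2) \<and>
     abelian_set E (vclass V E x3) \<and>
     (let G = RAAG V E;
          H = special_subgroup V E (Gamma_S V E x1 x2 x3);
          L = special_subgroup V E (Gamma_le_S V E x1 x2 x3);
          \<pi> = hom_of V E (kill_outside (Gamma_le_S V E x1 x2 x3))
      in \<forall>\<tau> \<in> out0_subst V E. \<exists>g \<in> L.
           (\<lambda>h. \<pi> (hom_of V E \<tau> h)) ` H = {g \<otimes>\<^bsub>G\<^esub> h \<otimes>\<^bsub>G\<^esub> inv\<^bsub>G\<^esub> g | h. h \<in> H})"

end

theory Submission
  imports Defs
begin


locale rg =
  fixes V :: "'v set" and E :: "'v \<Rightarrow> 'v \<Rightarrow> bool"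
  assumes sg: "simplicial_graph V E"
begin

abbreviation R where "R \<equiv> raag_eq V E"
abbreviation Stp where "Stp \<equiv> raag_step V E"

lemma E_sym: "E a b \<Longrightarrow> E b a" using sg unfolding simplicial_graph_def by blast
lemma E_V: "E a b \<Longrightarrow> a \<in> V \<and> b \<in> V" using sg unfolding simplicial_graph_def by blast
lemma E_irr: "\<not> E a a" using sg unfolding simplicial_graph_def by blast

lemma R_refl[simp]: "(x, x) \<in> R" unfolding raag_eq_def by simp

lemma R_sym: "(x, y) \<in> R \<Longrightarrow> (y, x) \<in> R"
proof -
  have "sym ((Stp \<union> Stp\<inverse>)\<^sup>*)" by (intro sym_rtrancl) (auto simp: sym_def)
  then show "(x, y) \<in> R \<Longrightarrow> (y, x) \<in> R" unfolding raag_eq_def sym_def by blast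
qed

lemma R_trans: "(x, y) \<in> R \<Longrightarrow> (y, z) \<in> R \<Longrightarrow> (x, z) \<in> R"
  unfolding raag_eq_def by (rule rtrancl_trans)

lemma R_step: "(x, y) \<in> Stp \<Longrightarrow> (x, y) \<in> R"
  unfolding raag_eq_def by blast

lemma cancel_gen: "a \<in> V \<Longrightarrow> (xs @ [(a, b), (a, \<not> b)] @ ys, xs @ ys) \<in> Stp"
  unfolding raag_step_def by blast
lemma swap_gen: "E a c \<Longrightarrow> (xs @ [(a, b), (c, d)] @ ys, xs @ [(c, d), (a, b)] @ ys) \<in> Stp"
  unfolding raag_step_def by blast

lemma Stp_ctx: "(x, y) \<in> Stp \<Longrightarrow> (a @ x @ b, a @ y @ b) \<in> Stp"
  apply (subst (asm) raag_step_def)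
  apply (elim UnE CollectE exE conjE)
  subgoal for xs ys a' b' using cancel_gen[of a' "a @ xs" b' "ys @ b"] by simp
  subgoal for xs ys a' b' c d using swap_gen[of a' c "a @ xs" b' d "ys @ b"] by simp
  done

lemma R_ctx: "(x, y) \<in> R \<Longrightarrow> (a @ x @ b, a @ y @ b) \<in> R"
  unfolding raag_eq_def
proof (induction rule: rtrancl_induct)
  case base then show ?case by simp
next
  case (step y z)
  then have "(a @ y @ b, a @ z @ b) \<in> Stp \<union> Stp\<inverse>" using Stp_ctx by blast
  with step show ?case by (meson rtrancl.rtrancl_into_rtrancl)
qed

lemma R_cong: "(x, x') \<in> R \<Longrightarrow> (y, y') \<in> R \<Longrightarrow> (x @ y, x' @ y') \<in> R"
proof -
  assume a1: "(x, x') \<in> R" and a2: "(y, y') \<in> R"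
  have 1: "(x @ y, x' @ y) \<in> R" using R_ctx[OF a1, of "[]" y] by simp
  have 2: "(x' @ y, x' @ y') \<in> R" using R_ctx[OF a2, of x' "[]"] by simp
  show ?thesis using R_trans[OF 1 2] .
qed

lemma R_cong3: "(x, x') \<in> R \<Longrightarrow> (y, y') \<in> R \<Longrightarrow> (z, z') \<in> R \<Longrightarrow> (x @ y @ z, x' @ y' @ z') \<in> R"
  by (intro R_cong)

lemma cancel2: "a \<in> V \<Longrightarrow> ([(a, b), (a, \<not> b)], []) \<in> R"
  using R_step[OF cancel_gen[of a "[]" b "[]"]] by simp

lemma swap2: "E a c \<Longrightarrow> ([(a, b), (c, d)], [(c, d), (a, b)]) \<in> R"
  using R_step[OF swap_gen[of a c "[]" b d "[]"]] by simp

definition OV :: "'v set \<Rightarrow> 'v word \<Rightarrow> bool" where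
  "OV U w \<longleftrightarrow> set w \<subseteq> U \<times> UNIV"

lemma OV_simps[simp]: "OV U [] " "OV U ((a,b) # w) \<longleftrightarrow> a \<in> U \<and> OV U w"
  "OV U (x @ y) \<longleftrightarrow> OV U x \<and> OV U y"
  unfolding OV_def by auto

lemma inv_word_simps[simp]: "inv_word [] = []" "inv_word ((a,b) # w) = inv_word w @ [(a, \<not> b)]"
  "inv_word (x @ y) = inv_word y @ inv_word x" "inv_word (inv_word x) = x"
  unfolding inv_word_def by (auto simp: rev_map comp_def case_prod_unfold)

lemma OV_inv[simp]: "OV U (inv_word w) \<longleftrightarrow> OV U w"
  unfolding OV_def inv_word_def by auto

lemma OV_mono: "OV U w \<Longrightarrow> U \<subseteq> U' \<Longrightarrow> OV U' w"
  unfolding OV_def by auto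

lemma inv_r: "OV V w \<Longrightarrow> (w @ inv_word w, []) \<in> R"
proof (induction w)
  case Nil then show ?case by simp
next
  case (Cons p w)
  obtain a b where p: "p = (a, b)" by force
  have "((a,b) # w @ inv_word w @ [(a, \<not> b)], [(a,b)] @ [] @ [(a, \<not> b)]) \<in> R"
    using R_ctx[of "w @ inv_word w" "[]" "[(a,b)]" "[(a, \<not> b)]"] Cons by (simp add: p)
  moreover have "([(a,b)] @ [] @ [(a, \<not> b)], []) \<in> R" using cancel2 Cons by (simp add: p)
  ultimately show ?case using R_trans by (simp add: p)
qed

lemma inv_l: "OV V w \<Longrightarrow> (inv_word w @ w, []) \<in> R"
  using inv_r[of "inv_word w"] by simp

lemma inv_R: "(x, y) \<in> R \<Longrightarrow> (inv_word x, inv_word y) \<in> R"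
  unfolding raag_eq_def
proof (induction rule: rtrancl_induct)
  case base then show ?case by simp
next
  case (step y z)
  have "(inv_word y, inv_word z) \<in> Stp \<or> (inv_word z, inv_word y) \<in> Stp"
  proof -
    have *: "\<And>y z. (y, z) \<in> Stp \<Longrightarrow> (inv_word y, inv_word z) \<in> Stp"
      unfolding raag_step_def
      apply (elim UnE CollectE exE conjE)
      subgoal for y z xs ys a b using cancel_gen[of a "inv_word ys" b "inv_word xs"] by (simp add: raag_step_def)
      subgoal for y z xs ys a b c d using swap_gen[of c a "inv_word ys" "\<not> d" "\<not> b" "inv_word xs"] E_sym by (simp add: raag_step_def)
      done
    from step(2) show ?thesis using * by blast
  qed
  then have "(inv_word y, inv_word z) \<in> (Stp \<union> Stp\<inverse>)" by blast
  with step(3) show ?case unfolding raag_eq_def by (meson rtrancl.rtrancl_into_rtrancl)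
qed

definition cv :: "'v \<Rightarrow> 'v \<Rightarrow> bool" where
  "cv a c \<longleftrightarrow> a \<in> V \<and> c \<in> V \<and> (E a c \<or> a = c)"

lemma swap_letter: "cv a c \<Longrightarrow> ([(a, b), (c, d)], [(c, d), (a, b)]) \<in> R"
proof -
  assume "cv a c"
  then consider "E a c" | "a = c" "a \<in> V" unfolding cv_def by blast
  then show ?thesis
  proof cases
    case 1 then show ?thesis by (rule swap2)
  next
    case 2
    show ?thesis
    proof (cases "b = d")
      case True then show ?thesis using 2 by simp
    next
      case False
      then have "d = (\<not> b)" by auto
      have h1: "([(a,b),(a,d)], []) \<in> R" using cancel2[of a b] 2 \<open>d = (\<not> b)\<close> by simp
      have h2: "([(a,d),(a,b)], []) \<in> R" using cancel2[of a d] 2 \<open>d = (\<not> b)\<close> by simp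
      show ?thesis using R_trans[OF h1 R_sym[OF h2]] \<open>a = c\<close> by simp
    qed
  qed
qed

definition wcv :: "'v word \<Rightarrow> 'v word \<Rightarrow> bool" where
  "wcv x y \<longleftrightarrow> (\<forall>p\<in>set x. \<forall>q\<in>set y. cv (fst p) (fst q))"

lemma comm_letter_word: "(\<forall>q\<in>set y. cv a (fst q)) \<Longrightarrow> ((a,b) # y, y @ [(a,b)]) \<in> R"
proof (induction y)
  case Nil then show ?case by simp
next
  case (Cons q y)
  obtain c d where q: "q = (c, d)" by force
  have 1: "([(a,b),(c,d)] @ y, [(c,d),(a,b)] @ y) \<in> R"
    using R_ctx[OF swap_letter[of a c b d], of "[]" y] Cons by (simp add: q)
  have 2: "([(c,d)] @ ((a,b) # y), [(c,d)] @ (y @ [(a,b)])) \<in> R"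
    using R_ctx[OF Cons.IH, of "[(c,d)]" "[]"] Cons by simp
  from 1 2 show ?case using R_trans by (simp add: q)
qed

lemma comm_words: "wcv x y \<Longrightarrow> (x @ y, y @ x) \<in> R"
proof (induction x)
  case Nil then show ?case by simp
next
  case (Cons p x)
  obtain a b where p: "p = (a, b)" by force
  have h: "wcv x y" using Cons.prems unfolding wcv_def by simp
  have 1: "([(a,b)] @ (x @ y), [(a,b)] @ (y @ x)) \<in> R"
    using R_ctx[OF Cons.IH[OF h], of "[(a,b)]" "[]"] by simp
  have 2: "(((a,b) # y) @ x, (y @ [(a,b)]) @ x) \<in> R"
    using R_ctx[OF comm_letter_word[of y a b], of "[]" x] Cons.prems unfolding wcv_def by (simp add: p)
  from 1 2 show ?case using R_trans by (simp add: p)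
qed

definition wcomm :: "'v word \<Rightarrow> 'v word \<Rightarrow> bool" where
  "wcomm x y \<longleftrightarrow> (x @ y, y @ x) \<in> R"

lemma wcomm_sym: "wcomm x y \<Longrightarrow> wcomm y x" unfolding wcomm_def using R_sym by blast

lemma wcomm_inv: "OV V x \<Longrightarrow> wcomm x y \<Longrightarrow> wcomm (inv_word x) y"
proof -
  assume ov: "OV V x" and c: "wcomm x y"
  let ?i = "inv_word x"
  have 1: "(?i @ y, ?i @ (y @ x) @ ?i) \<in> R"
    using R_ctx[OF R_sym[OF inv_r[OF ov]], of "?i @ y" "[]"] by simp
  have 2: "(?i @ (y @ x) @ ?i, ?i @ (x @ y) @ ?i) \<in> R"
    using R_ctx[OF R_sym[OF c[unfolded wcomm_def]], of ?i ?i] .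
  have 3: "(?i @ (x @ y) @ ?i, y @ ?i) \<in> R"
    using R_ctx[OF inv_l[OF ov], of "[]" "y @ ?i"] by simp
  show ?thesis unfolding wcomm_def
    using R_trans[OF R_trans[OF 1 2] 3] .
qed

end

context rg begin

abbreviation cls where "cls \<equiv> raag_cls V E"
abbreviation G where "G \<equiv> RAAG V E"

lemma cls_def': "cls w = {y. (w, y) \<in> R}" unfolding raag_cls_def by auto

lemma cls_eq: "cls x = cls y \<longleftrightarrow> (x, y) \<in> R"
proof
  assume "cls x = cls y"
  then have "y \<in> cls x" by (simp add: cls_def')
  then show "(x, y) \<in> R" by (simp add: cls_def')
next
  assume h: "(x, y) \<in> R"
  show "cls x = cls y" unfolding cls_def' using h R_trans R_sym by blast
qed

lemma mult_cls: "cls a \<otimes>\<^bsub>G\<^esub> cls b = cls (a @ b)"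
proof -
  have "{w. \<exists>a'\<in>cls a. \<exists>b'\<in>cls b. (a' @ b', w) \<in> R} = cls (a @ b)"
  proof (rule equalityI; rule subsetI)
    fix w assume "w \<in> {w. \<exists>a'\<in>cls a. \<exists>b'\<in>cls b. (a' @ b', w) \<in> R}"
    then obtain a' b' where "(a, a') \<in> R" "(b, b') \<in> R" "(a' @ b', w) \<in> R" by (auto simp: cls_def')
    then show "w \<in> cls (a @ b)" unfolding cls_def' using R_cong R_trans by blast
  next
    fix w assume "w \<in> cls (a @ b)"
    then have "(a @ b, w) \<in> R" by (simp add: cls_def')
    moreover have "a \<in> cls a" "b \<in> cls b" by (simp_all add: cls_def')
    ultimately show "w \<in> {w. \<exists>a'\<in>cls a. \<exists>b'\<in>cls b. (a' @ b', w) \<in> R}" by blast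
  qed
  then show ?thesis by (simp add: RAAG_def)
qed

lemma one_G: "\<one>\<^bsub>G\<^esub> = cls []" by (simp add: RAAG_def)

lemma carrier_G: "carrier G = {cls w | w. OV V w}" by (simp add: RAAG_def OV_def)

lemma group_G: "group G"
proof (rule groupI)
  fix x y assume "x \<in> carrier G" "y \<in> carrier G"
  then show "x \<otimes>\<^bsub>G\<^esub> y \<in> carrier G" by (auto simp: carrier_G mult_cls)
next
  show "\<one>\<^bsub>G\<^esub> \<in> carrier G" by (auto simp: carrier_G one_G intro!: exI[of _ "[]"])
next
  fix x y z assume "x \<in> carrier G" "y \<in> carrier G" "z \<in> carrier G"
  then show "x \<otimes>\<^bsub>G\<^esub> y \<otimes>\<^bsub>G\<^esub> z = x \<otimes>\<^bsub>G\<^esub> (y \<otimes>\<^bsub>G\<^esub> z)" by (auto simp: carrier_G mult_cls)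
next
  fix x assume "x \<in> carrier G"
  then show "\<one>\<^bsub>G\<^esub> \<otimes>\<^bsub>G\<^esub> x = x" by (auto simp: carrier_G mult_cls one_G)
next
  fix x assume "x \<in> carrier G"
  then obtain w where w: "OV V w" "x = cls w" by (auto simp: carrier_G)
  have "cls (inv_word w) \<in> carrier G" using w by (auto simp: carrier_G)
  moreover have "cls (inv_word w) \<otimes>\<^bsub>G\<^esub> x = \<one>\<^bsub>G\<^esub>"
    using w inv_l[OF w(1)] by (simp add: mult_cls one_G cls_eq)
  ultimately show "\<exists>y\<in>carrier G. y \<otimes>\<^bsub>G\<^esub> x = \<one>\<^bsub>G\<^esub>" by blast
qed

lemma cls_carrier: "OV V w \<Longrightarrow> cls w \<in> carrier G" by (auto simp: carrier_G)

lemma inv_cls: "OV V w \<Longrightarrow> inv\<^bsub>G\<^esub> (cls w) = cls (inv_word w)"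
proof -
  assume w: "OV V w"
  have "cls (inv_word w) \<otimes>\<^bsub>G\<^esub> cls w = \<one>\<^bsub>G\<^esub>"
    using inv_l[OF w] by (simp add: mult_cls one_G cls_eq)
  then show ?thesis using group.inv_equality[OF group_G] cls_carrier w by simp
qed

lemma generate_char:
  assumes U: "U \<subseteq> V"
  shows "generate G (vgen V E ` U) = {cls w | w. OV U w}"
proof
  show "generate G (vgen V E ` U) \<subseteq> {cls w | w. OV U w}"
  proof
    fix h assume "h \<in> generate G (vgen V E ` U)"
    then show "h \<in> {cls w | w. OV U w}"
    proof (induction rule: generate.induct)
      case one then show ?case by (auto simp: one_G intro!: exI[of _ "[]"])
    next
      case (incl h) then show ?case by (auto simp: vgen_def)
    next
      case (inv h)
      then obtain u where u: "u \<in> U" "h = cls [(u, True)]" by (auto simp: vgen_def)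
      then have "inv\<^bsub>G\<^esub> h = cls [(u, False)]" using inv_cls[of "[(u, True)]"] U by auto
      then show ?case using u by (auto intro!: exI[of _ "[(u, False)]"])
    next
      case (eng h1 h2)
      then obtain w1 w2 where "OV U w1" "h1 = cls w1" "OV U w2" "h2 = cls w2" by auto
      then show ?case by (auto simp: mult_cls intro!: exI[of _ "w1 @ w2"])
    qed
  qed
next
  show "{cls w | w. OV U w} \<subseteq> generate G (vgen V E ` U)"
  proof -
    have "OV U w \<Longrightarrow> cls w \<in> generate G (vgen V E ` U)" for w
    proof (induction w)
      case Nil then show ?case using generate.one[of G] by (simp add: one_G)
    next
      case (Cons p w)
      obtain a b where p: "p = (a, b)" by force
      have a: "a \<in> U" "OV U w" using Cons.prems p by auto
      have g: "cls [(a, b)] \<in> generate G (vgen V E ` U)"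
      proof (cases b)
        case True
        have "vgen V E a \<in> vgen V E ` U" using a by blast
        then show ?thesis using generate.incl[of "vgen V E a" "vgen V E ` U" G] True by (simp add: vgen_def)
      next
        case False
        have "inv\<^bsub>G\<^esub> (cls [(a, True)]) = cls [(a, False)]" using inv_cls[of "[(a, True)]"] a U by auto
        moreover have "vgen V E a \<in> vgen V E ` U" using a by blast
        ultimately show ?thesis using generate.inv[of "vgen V E a" "vgen V E ` U" G] False by (simp add: vgen_def)
      qed
      have "cls [(a, b)] \<otimes>\<^bsub>G\<^esub> cls w \<in> generate G (vgen V E ` U)"
        using generate.eng[OF g Cons.IH[OF a(2)]] .
      then show ?case by (simp add: mult_cls p)
    qed
    then show ?thesis by blast
  qed
qed

lemma wh_simps[simp]: "word_hom \<sigma> [] = []"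
  "word_hom \<sigma> ((a, b) # w) = (if b then \<sigma> a else inv_word (\<sigma> a)) @ word_hom \<sigma> w"
  "word_hom \<sigma> (x @ y) = word_hom \<sigma> x @ word_hom \<sigma> y"
  unfolding word_hom_def by auto

lemma wh_inv[simp]: "word_hom \<sigma> (inv_word x) = inv_word (word_hom \<sigma> x)"
  by (induction x) auto

lemma wh_comp: "word_hom (\<lambda>u. word_hom \<sigma> (\<tau> u)) w = word_hom \<sigma> (word_hom \<tau> w)"
  by (induction w) auto

lemma wh_id[simp]: "word_hom id_subst w = w"
  by (induction w) (auto simp: id_subst_def)

lemma wh_OV: "(\<And>a. a \<in> U \<Longrightarrow> OV U' (\<sigma> a)) \<Longrightarrow> OV U w \<Longrightarrow> OV U' (word_hom \<sigma> w)"
  by (induction w) auto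

definition resp :: "('v word \<Rightarrow> 'v word) \<Rightarrow> bool" where
  "resp f \<longleftrightarrow> (\<forall>x y. (x, y) \<in> R \<longrightarrow> (f x, f y) \<in> R)"

lemma resp_I:
  assumes "\<And>x y. (x, y) \<in> Stp \<Longrightarrow> (f x, f y) \<in> R"
  shows "resp f"
  unfolding resp_def
proof (intro allI impI)
  fix x y assume "(x, y) \<in> R"
  then have "(x, y) \<in> (Stp \<union> Stp\<inverse>)\<^sup>*" unfolding raag_eq_def .
  then show "(f x, f y) \<in> R"
  proof (induction rule: rtrancl_induct)
    case base then show ?case by simp
  next
    case (step y z)
    then have "(f y, f z) \<in> R" using assms R_sym by blast
    with step(3) show ?case using R_trans by blast
  qed
qed

definition good :: "('v \<Rightarrow> 'v word) \<Rightarrow> bool" where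
  "good \<sigma> \<longleftrightarrow> (\<forall>a\<in>V. OV V (\<sigma> a)) \<and> (\<forall>a c. E a c \<longrightarrow> wcomm (\<sigma> a) (\<sigma> c))"

lemma good_resp:
  assumes g: "good \<sigma>"
  shows "resp (word_hom \<sigma>)"
proof (rule resp_I)
  have ov: "\<And>a. a \<in> V \<Longrightarrow> OV V (\<sigma> a)" using g unfolding good_def by blast
  fix x y assume "(x, y) \<in> Stp"
  then consider (c) xs ys a b where "a \<in> V" "x = xs @ [(a, b), (a, \<not> b)] @ ys" "y = xs @ ys"
    | (s) xs ys a b c d where "E a c" "x = xs @ [(a, b), (c, d)] @ ys" "y = xs @ [(c, d), (a, b)] @ ys"
    unfolding raag_step_def by blast
  then show "(word_hom \<sigma> x, word_hom \<sigma> y) \<in> R"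
  proof cases
    case c
    have h: "(word_hom \<sigma> [(a, b), (a, \<not> b)], []) \<in> R"
      using inv_r[OF ov[OF c(1)]] inv_l[OF ov[OF c(1)]] by (cases b) auto
    have eq: "word_hom \<sigma> x = word_hom \<sigma> xs @ word_hom \<sigma> [(a, b), (a, \<not> b)] @ word_hom \<sigma> ys"
      using c(2) by (simp only: wh_simps(3))
    show ?thesis using R_ctx[OF h, of "word_hom \<sigma> xs" "word_hom \<sigma> ys"] eq c(3)
      by (simp only: wh_simps(3) append_Nil)
  next
    case s
    have a: "OV V (\<sigma> a)" "OV V (\<sigma> c)" using E_V[OF s(1)] ov by auto
    have w: "wcomm (\<sigma> a) (\<sigma> c)" using g s(1) unfolding good_def by blast
    have w2: "wcomm (if b then \<sigma> a else inv_word (\<sigma> a)) (if d then \<sigma> c else inv_word (\<sigma> c))"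
      using w wcomm_inv[OF a(1)] wcomm_inv[OF a(2)] wcomm_sym by (cases b; cases d) auto
    have h: "(word_hom \<sigma> [(a, b), (c, d)], word_hom \<sigma> [(c, d), (a, b)]) \<in> R"
      using w2 unfolding wcomm_def by simp
    have eq: "word_hom \<sigma> x = word_hom \<sigma> xs @ word_hom \<sigma> [(a, b), (c, d)] @ word_hom \<sigma> ys"
      "word_hom \<sigma> y = word_hom \<sigma> xs @ word_hom \<sigma> [(c, d), (a, b)] @ word_hom \<sigma> ys"
      using s(2,3) by (simp_all only: wh_simps(3))
    show ?thesis using R_ctx[OF h, of "word_hom \<sigma> xs" "word_hom \<sigma> ys"] eq by (simp only:)
  qed
qed

lemma hom_of_cls: "resp (word_hom \<sigma>) \<Longrightarrow> hom_of V E \<sigma> (cls w) = cls (word_hom \<sigma> w)"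
proof -
  assume r: "resp (word_hom \<sigma>)"
  show ?thesis
  proof (rule equalityI; rule subsetI)
    fix y assume "y \<in> hom_of V E \<sigma> (cls w)"
    then obtain x where x: "(w, x) \<in> R" "(word_hom \<sigma> x, y) \<in> R" unfolding hom_of_def cls_def' by blast
    have "(word_hom \<sigma> w, word_hom \<sigma> x) \<in> R" using r x(1) unfolding resp_def by blast
    then show "y \<in> cls (word_hom \<sigma> w)" using R_trans[OF _ x(2)] unfolding cls_def' by blast
  next
    fix y assume "y \<in> cls (word_hom \<sigma> w)"
    then show "y \<in> hom_of V E \<sigma> (cls w)" unfolding hom_of_def cls_def' using R_refl by blast
  qed
qed

end

context rg begin

lemma E_comm: "E a b \<longleftrightarrow> E b a" using E_sym by blast

lemma lk_iff: "w \<in> lk V E u \<longleftrightarrow> w \<in> V \<and> E u w" unfolding lk_def by auto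
lemma st_iff: "w \<in> st V E u \<longleftrightarrow> w = u \<or> (w \<in> V \<and> E u w)" unfolding st_def lk_def by auto

lemma vle_refl: "u \<in> V \<Longrightarrow> vle V E u u" unfolding vle_def st_def by auto

lemma vle_lk: "vle V E u v \<Longrightarrow> E u a \<Longrightarrow> a = v \<or> E v a"
proof -
  assume h: "vle V E u v" "E u a"
  then have "a \<in> lk V E u" using E_V by (auto simp: lk_iff)
  then have "a \<in> st V E v" using h(1) unfolding vle_def by blast
  then show ?thesis by (auto simp: st_iff)
qed

lemma vle_trans:
  assumes uv: "vle V E u v" and vw: "vle V E v w"
  shows "vle V E u w"
proof -
  have V: "u \<in> V" "v \<in> V" "w \<in> V" using uv vw unfolding vle_def by auto
  have "a \<in> st V E w" if a: "a \<in> lk V E u" for a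
  proof -
    have ua: "E u a" using a by (simp add: lk_iff)
    from vle_lk[OF uv ua] show ?thesis
    proof
      assume va: "E v a"
      have "a = w \<or> E w a" using vle_lk[OF vw va] .
      then show ?thesis using E_V[OF va] by (auto simp: st_iff)
    next
      assume av: "a = v"
      have "u = w \<or> E w u" using vle_lk[OF vw E_sym[OF ua[unfolded av]]] .
      then show ?thesis
      proof
        assume "u = w" then show ?thesis using a vw V unfolding vle_def by (auto simp: st_iff lk_iff)
      next
        assume "E w u"
        then have "w = v \<or> E v w" using vle_lk[OF uv E_sym] by blast
        then show ?thesis using av V by (auto simp: st_iff E_comm)
      qed
    qed
  qed
  then show ?thesis using V unfolding vle_def by blast
qed

lemma vclass_self: "x \<in> V \<Longrightarrow> x \<in> vclass V E x"
  unfolding vclass_def vequiv_def using vle_refl by auto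

lemma vclass_le: "u \<in> vclass V E x \<Longrightarrow> vle V E u x \<and> vle V E x u \<and> u \<in> V \<and> x \<in> V"
  unfolding vclass_def vequiv_def vle_def by auto

lemma class_adj:
  assumes ab: "\<forall>u\<in>V. abelian_set E (vclass V E u)" and u: "u \<in> vclass V E x" and ne: "u \<noteq> x"
  shows "E u x"
proof -
  have x: "x \<in> V" using vclass_le[OF u] by auto
  show ?thesis using ab x u vclass_self[OF x] ne unfolding abelian_set_def by blast
qed

abbreviation conn where "conn \<equiv> conn_in E"

lemma conn_W: "conn W a b \<Longrightarrow> a \<in> W \<and> b \<in> W" unfolding conn_in_def by auto
lemma conn_refl: "a \<in> W \<Longrightarrow> conn W a a" unfolding conn_in_def by auto
lemma conn_edge: "a \<in> W \<Longrightarrow> b \<in> W \<Longrightarrow> E a b \<Longrightarrow> conn W a b" unfolding conn_in_def by auto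
lemma conn_trans: "conn W a b \<Longrightarrow> conn W b c \<Longrightarrow> conn W a c" unfolding conn_in_def by auto

lemma conn_sym: "conn W a b \<Longrightarrow> conn W b a"
proof -
  assume "conn W a b"
  then have h: "(a, b) \<in> {(p, q). p \<in> W \<and> q \<in> W \<and> E p q}\<^sup>*" and ab: "a \<in> W" "b \<in> W"
    unfolding conn_in_def by auto
  have s: "sym {(p, q). p \<in> W \<and> q \<in> W \<and> E p q}" unfolding sym_def using E_sym by auto
  have "(b, a) \<in> {(p, q). p \<in> W \<and> q \<in> W \<and> E p q}\<^sup>*"
    using sym_rtrancl[OF s] h unfolding sym_def by blast
  then show ?thesis using ab unfolding conn_in_def by auto
qed

lemma conn_closed:
  assumes c: "conn W a b" and aD: "a \<in> D"
    and cl: "\<And>y z. y \<in> D \<Longrightarrow> y \<in> W \<Longrightarrow> z \<in> W \<Longrightarrow> E y z \<Longrightarrow> z \<in> D"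
  shows "b \<in> D"
proof -
  have "(a, b) \<in> {(p, q). p \<in> W \<and> q \<in> W \<and> E p q}\<^sup>*" using c unfolding conn_in_def by auto
  then show ?thesis
  proof (induction rule: rtrancl_induct)
    case base then show ?case using aD .
  next
    case (step y z) then show ?case using cl by blast
  qed
qed

lemma conn_first:
  assumes c: "conn W a b" and ne: "a \<noteq> b"
  obtains p where "p \<in> W" "E a p" "conn W p b"
proof -
  have "(a, b) \<in> {(p, q). p \<in> W \<and> q \<in> W \<and> E p q}\<^sup>*" and bW: "b \<in> W" using c unfolding conn_in_def by auto
  then show ?thesis
  proof (cases rule: converse_rtranclE)
    case base then show ?thesis using ne by simp
  next
    case (step p)
    then show ?thesis using that bW unfolding conn_in_def by auto
  qed
qed

lemma SIL_swap: "SIL V E x y z \<Longrightarrow> SIL V E y x z"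
  unfolding SIL_def Let_def by (auto simp: Int_commute E_comm)

lemma SIL_facts:
  assumes "SIL V E x1 x2 x3"
  shows "x1 \<in> V" "x2 \<in> V" "x3 \<in> V" "x1 \<noteq> x2" "x1 \<noteq> x3" "x2 \<noteq> x3"
    "\<not> E x1 x2" "\<not> E x1 x3" "\<not> E x2 x3" "\<not> E x2 x1" "\<not> E x3 x1" "\<not> E x3 x2"
    "\<not> conn (V - (lk V E x1 \<inter> lk V E x2)) x3 x1"
    "\<not> conn (V - (lk V E x1 \<inter> lk V E x2)) x3 x2"
  using assms unfolding SIL_def Let_def by (simp_all add: E_comm)

lemma notin_GS:
  assumes "v \<notin> Gamma_S V E x1 x2 x3" "x1 \<in> V" "x2 \<in> V" "x3 \<in> V"
  shows "v \<noteq> x1" "v \<noteq> x2" "v \<noteq> x3"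
  using assms vclass_self unfolding Gamma_S_def by auto

lemma le_not_adj:
  assumes "vle V E v x" "E v y" "y \<noteq> x" "\<not> E x y"
  shows False
  using vle_lk[OF assms(1,2)] assms(3,4) by auto

lemma C1:
  assumes S: "SIL V E x1 x2 x3" and v: "vle V E v x3" and nv: "v \<notin> Gamma_S V E x1 x2 x3"
  shows "SIL V E x1 x2 v"
proof -
  note F = SIL_facts[OF S]
  note N = notin_GS[OF nv F(1-3)]
  have vV: "v \<in> V" using v unfolding vle_def by auto
  have n1: "\<not> E x1 v" using le_not_adj[OF v E_sym] F by blast
  have n2: "\<not> E x2 v" using le_not_adj[OF v E_sym] F by blast
  let ?W = "V - (lk V E x1 \<inter> lk V E x2)"
  have x3W: "x3 \<in> ?W" using F by (auto simp: lk_iff)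
  have nc: "\<not> conn ?W v t" if t: "t = x1 \<or> t = x2" for t
  proof
    assume c: "conn ?W v t"
    have "v \<noteq> t" using N t by auto
    then obtain p where p: "p \<in> ?W" "E v p" "conn ?W p t" using conn_first[OF c] by blast
    have "p = x3 \<or> E x3 p" using vle_lk[OF v p(2)] .
    then have "conn ?W x3 p" using conn_refl[OF x3W] conn_edge[OF x3W p(1)] by auto
    then have "conn ?W x3 t" using conn_trans p(3) by blast
    then show False using F t by auto
  qed
  show ?thesis unfolding SIL_def Let_def using F N vV n1 n2 nc by auto
qed

lemma lemB:
  assumes S: "SIL V E x1 x2 x3" and Y: "Y \<subseteq> V"
    and noK: "\<And>y. conn Y x3 y \<Longrightarrow> y \<notin> lk V E x1 \<inter> lk V E x2"
    and c: "conn Y x3 y"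
  shows "conn (V - (lk V E x1 \<inter> lk V E x2)) x3 y"
proof -
  note F = SIL_facts[OF S]
  let ?W = "V - (lk V E x1 \<inter> lk V E x2)"
  have x3W: "x3 \<in> ?W" using F by (auto simp: lk_iff)
  have "y \<in> {y. conn Y x3 y \<and> conn ?W x3 y}"
  proof (rule conn_closed[OF c])
    show "x3 \<in> {y. conn Y x3 y \<and> conn ?W x3 y}" using conn_W[OF c] conn_refl x3W by auto
  next
    fix y z assume "y \<in> {y. conn Y x3 y \<and> conn ?W x3 y}" "y \<in> Y" "z \<in> Y" "E y z"
    then have cy: "conn Y x3 y" and cw: "conn ?W x3 y" and yz: "y \<in> Y" "z \<in> Y" "E y z" by auto
    have cz: "conn Y x3 z" using conn_trans[OF cy conn_edge[OF yz]] .
    have zW: "z \<in> ?W" using noK[OF cz] Y yz(2) by auto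
    have yW: "y \<in> ?W" using conn_W[OF cw] by blast
    show "z \<in> {y. conn Y x3 y \<and> conn ?W x3 y}"
      using cz conn_trans[OF cw conn_edge[OF yW zW yz(3)]] by blast
  qed
  then show ?thesis by simp
qed

lemma C2:
  assumes S: "SIL V E x1 x2 x3" and v: "vle V E v x1" and nv: "v \<notin> Gamma_S V E x1 x2 x3"
    and nc: "\<not> conn (V - st V E v) x3 x2"
  shows "SIL V E v x2 x3"
proof -
  note F = SIL_facts[OF S]
  note N = notin_GS[OF nv F(1-3)]
  have vV: "v \<in> V" using v unfolding vle_def by auto
  have n2: "\<not> E v x2" using le_not_adj[OF v] F by blast
  have n3: "\<not> E v x3" using le_not_adj[OF v] F by blast
  let ?Y = "V - st V E v"
  let ?W = "V - (lk V E x1 \<inter> lk V E x2)"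
  let ?W' = "V - (lk V E v \<inter> lk V E x2)"
  have x3Y: "x3 \<in> ?Y" and x2Y: "x2 \<in> ?Y" using F N n2 n3 by (auto simp: st_iff)
  have a: "y \<notin> lk V E x2" if "conn ?Y x3 y" for y
  proof
    assume "y \<in> lk V E x2"
    then have "E y x2" "y \<in> ?Y" using conn_W[OF that] by (auto simp: lk_iff E_comm)
    then have "conn ?Y y x2" using x2Y conn_edge by blast
    then show False using nc conn_trans that by blast
  qed
  have b: "conn ?W x3 y" if "conn ?Y x3 y" for y
    using lemB[OF S _ _ that] a by blast
  have D: "t \<in> {y. conn ?Y x3 y}" if "conn ?W' x3 t" for t
  proof (rule conn_closed[OF that])
    show "x3 \<in> {y. conn ?Y x3 y}" using conn_refl[OF x3Y] by simp
  next
    fix y z assume yD: "y \<in> {y. conn ?Y x3 y}" and yW: "y \<in> ?W'" and zW: "z \<in> ?W'" and e: "E y z"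
    show "z \<in> {y. conn ?Y x3 y}"
    proof (cases "z \<in> ?Y")
      case True
      have cy: "conn ?Y x3 y" using yD by blast
      show ?thesis using conn_trans[OF cy conn_edge[OF _ True e]] conn_W[OF cy] by blast
    next
      case False
      then have "z = v \<or> E v z" using zW by (auto simp: st_iff)
      then show ?thesis
      proof
        assume "z = v"
        then have "y \<in> st V E v" using e E_V by (auto simp: st_iff E_comm)
        then show ?thesis using yD conn_W by auto
      next
        assume vz: "E v z"
        have z2: "z \<notin> lk V E x2" using zW vz E_V by (auto simp: lk_iff)
        have cy: "conn ?W x3 y" using b yD by blast
        have yW0: "y \<in> ?W" using conn_W[OF cy] by blast
        have "z = x1 \<or> E x1 z" using vle_lk[OF v vz] .
        then have "conn ?W x3 x1"
        proof
          assume "z = x1"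
          then show ?thesis using cy conn_edge[OF yW0 _ e] conn_trans F by (auto simp: lk_iff)
        next
          assume xz: "E x1 z"
          have zW0: "z \<in> ?W" using z2 E_V[OF xz] by auto
          have x1W: "x1 \<in> ?W" using F by (auto simp: lk_iff)
          show ?thesis using conn_trans[OF conn_trans[OF cy conn_edge[OF yW0 zW0 e]] conn_edge[OF zW0 x1W E_sym[OF xz]]] .
        qed
        then show ?thesis using F by blast
      qed
    qed
  qed
  have "\<not> conn ?W' x3 v"
  proof
    assume "conn ?W' x3 v"
    then have "conn ?Y x3 v" using D by blast
    then show False using conn_W[of "?Y" x3 v] by (simp add: st_iff)
  qed
  moreover have "\<not> conn ?W' x3 x2" using D nc by blast
  ultimately show ?thesis unfolding SIL_def Let_def using F N vV n2 n3 E_sym by blast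
qed

lemma lemP:
  assumes ab: "\<forall>u\<in>V. abelian_set E (vclass V E u)"
    and S: "SIL V E x1 x2 x3" and v: "vle V E v x1" and nv: "v \<notin> Gamma_S V E x1 x2 x3"
    and c: "conn (V - st V E v) x3 x2"
    and u: "u \<in> Gamma_S V E x1 x2 x3" and us: "u \<notin> st V E v"
  shows "conn (V - st V E v) x3 u"
proof -
  note F = SIL_facts[OF S]
  let ?Y = "V - st V E v"
  have uV: "u \<in> V" using u unfolding Gamma_S_def vclass_def by auto
  have uY: "u \<in> ?Y" using uV us by auto
  have x3Y: "x3 \<in> ?Y" and x2Y: "x2 \<in> ?Y" using conn_W[OF c] by auto
  obtain k where k: "conn ?Y x3 k" "k \<in> lk V E x1 \<inter> lk V E x2"
    using lemB[OF S _ _ c] F by blast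
  have kY: "k \<in> ?Y" using conn_W[OF k(1)] by auto
  from u consider "u \<in> vclass V E x1" | "u \<in> vclass V E x2" | "u \<in> vclass V E x3"
    unfolding Gamma_S_def by blast
  then show ?thesis
  proof cases
    case 1
    show ?thesis
    proof (cases "u = x1")
      case True
      have "E k u" using k(2) True by (auto simp: lk_iff E_comm)
      then show ?thesis using conn_trans[OF k(1) conn_edge[OF kY uY]] by blast
    next
      case False
      have ux: "E u x1" using class_adj[OF ab 1 False] .
      have "vle V E x1 u" using vclass_le[OF 1] by auto
      then have "k = u \<or> E u k" using vle_lk k(2) by (auto simp: lk_iff)
      then show ?thesis
      proof
        assume "k = u" then show ?thesis using k(1) by simp
      next
        assume "E u k" then show ?thesis using conn_trans[OF k(1) conn_edge[OF kY uY]] E_sym by blast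
      qed
    qed
  next
    case 2
    show ?thesis
    proof (cases "u = x2")
      case True then show ?thesis using c by simp
    next
      case False
      then have "E x2 u" using class_adj[OF ab 2] E_sym by blast
      then show ?thesis using conn_trans[OF c conn_edge[OF x2Y uY]] by blast
    qed
  next
    case 3
    show ?thesis
    proof (cases "u = x3")
      case True then show ?thesis using conn_refl[OF x3Y] by simp
    next
      case False
      then have "E x3 u" using class_adj[OF ab 3] E_sym by blast
      then show ?thesis using conn_edge[OF x3Y uY] by blast
    qed
  qed
qed

lemma iso:
  assumes "vle V E a w" "a \<notin> st V E w" "conn (V - st V E w) a b"
  shows "a = b"
proof (rule ccontr)
  assume "a \<noteq> b"
  then obtain p where "p \<in> V - st V E w" "E a p" using conn_first[OF assms(3)] by blast
  then show False using vle_lk[OF assms(1)] by (auto simp: st_iff)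
qed

end

context rg begin

definition mu :: "'v \<Rightarrow> 'v \<Rightarrow> 'v \<Rightarrow> nat" where
  "mu x1 x2 x3 = card {u\<in>V. vle V E u x1} + card {u\<in>V. vle V E u x2} + card {u\<in>V. vle V E u x3}"

lemma le_card:
  assumes fin: "finite V" and vx: "vle V E v x" and xv: "\<not> vle V E x v"
  shows "card {u\<in>V. vle V E u v} < card {u\<in>V. vle V E u x}"
proof (rule psubset_card_mono)
  show "finite {u\<in>V. vle V E u x}" using fin by simp
  have xV: "x \<in> V" using vx unfolding vle_def by auto
  show "{u\<in>V. vle V E u v} \<subset> {u\<in>V. vle V E u x}"
    using vle_trans[OF _ vx] xv vle_refl[OF xV] xV by blast
qed

lemma GS_swap: "Gamma_S V E x2 x1 x3 = Gamma_S V E x1 x2 x3"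
  unfolding Gamma_S_def by blast

lemma GL_swap: "Gamma_le_S V E x2 x1 x3 = Gamma_le_S V E x1 x2 x3"
  unfolding Gamma_le_S_def by blast

lemma not_back:
  assumes "v \<notin> Gamma_S V E x1 x2 x3" "vle V E v x" "x = x1 \<or> x = x2 \<or> x = x3"
  shows "\<not> vle V E x v"
proof
  assume xv: "vle V E x v"
  have "v \<in> vclass V E x" using xv assms(2) unfolding vclass_def vequiv_def vle_def by auto
  then show False using assms(1,3) unfolding Gamma_S_def by auto
qed

lemma key:
  assumes fin: "finite V" and S: "SIL V E x1 x2 x3"
    and min: "\<And>a b c. SIL V E a b c \<Longrightarrow> mu x1 x2 x3 \<le> mu a b c"
    and vL: "v \<in> Gamma_le_S V E x1 x2 x3" and vS: "v \<notin> Gamma_S V E x1 x2 x3"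
  shows "\<not> vle V E v x3" "vle V E v x1 \<Longrightarrow> conn (V - st V E v) x3 x2"
    "vle V E v x2 \<Longrightarrow> conn (V - st V E v) x3 x1"
proof -
  show "\<not> vle V E v x3"
  proof
    assume v: "vle V E v x3"
    have "SIL V E x1 x2 v" using C1[OF S v vS] .
    moreover have "mu x1 x2 v < mu x1 x2 x3"
      using le_card[OF fin v not_back[OF vS v]] unfolding mu_def by simp
    ultimately show False using min by fastforce
  qed
  show "conn (V - st V E v) x3 x2" if v: "vle V E v x1"
  proof (rule ccontr)
    assume "\<not> conn (V - st V E v) x3 x2"
    then have "SIL V E v x2 x3" using C2[OF S v vS] by blast
    moreover have "mu v x2 x3 < mu x1 x2 x3"
      using le_card[OF fin v not_back[OF vS v]] unfolding mu_def by simp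
    ultimately show False using min by fastforce
  qed
  show "conn (V - st V E v) x3 x1" if v: "vle V E v x2"
  proof (rule ccontr)
    assume "\<not> conn (V - st V E v) x3 x1"
    then have "SIL V E v x1 x3" using C2[OF SIL_swap[OF S] v] vS GS_swap by simp
    then have "SIL V E x1 v x3" by (rule SIL_swap)
    moreover have "mu x1 v x3 < mu x1 x2 x3"
      using le_card[OF fin v not_back[OF vS v]] unfolding mu_def by simp
    ultimately show False using min by fastforce
  qed
qed

lemma good_SIL:
  assumes fin: "finite V" and ab: "\<forall>u\<in>V. abelian_set E (vclass V E u)"
    and ex: "\<exists>x y z. SIL V E x y z"
  shows "\<exists>x1 x2 x3. SIL V E x1 x2 x3 \<and>
     (\<forall>v\<in>Gamma_S V E x1 x2 x3. \<forall>w\<in>Gamma_le_S V E x1 x2 x3. vle V E v w \<longrightarrow> v \<noteq> w \<longrightarrow> w \<in> Gamma_S V E x1 x2 x3) \<and>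
     (\<forall>v\<in>Gamma_le_S V E x1 x2 x3 - Gamma_S V E x1 x2 x3. x3 \<notin> st V E v \<and>
        (\<forall>u\<in>Gamma_S V E x1 x2 x3 - st V E v. conn (V - st V E v) x3 u))"
proof -
  define P where "P n \<longleftrightarrow> (\<exists>a b c. SIL V E a b c \<and> mu a b c = n)" for n
  have "\<exists>n. P n" using ex unfolding P_def by blast
  then have "P (LEAST n. P n)" by (rule LeastI_ex)
  then obtain x1 x2 x3 where S: "SIL V E x1 x2 x3" and m: "mu x1 x2 x3 = (LEAST n. P n)"
    unfolding P_def by blast
  have min: "mu x1 x2 x3 \<le> mu a b c" if "SIL V E a b c" for a b c
    unfolding m by (rule Least_le) (use that P_def in blast)
  note F = SIL_facts[OF S]
  let ?S = "Gamma_S V E x1 x2 x3" and ?L = "Gamma_le_S V E x1 x2 x3"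
  have PP: "x3 \<notin> st V E v \<and> (\<forall>u\<in>?S - st V E v. conn (V - st V E v) x3 u)" if v: "v \<in> ?L - ?S" for v
  proof -
    have vL: "v \<in> ?L" and vS: "v \<notin> ?S" using v by auto
    note K = key[OF fin S min vL vS]
    have vv: "vle V E v x1 \<or> vle V E v x2" using v K(1) unfolding Gamma_le_S_def by blast
    have n3: "v \<noteq> x3" using notin_GS[of v x1 x2 x3] v F by blast
    show ?thesis using vv
    proof
      assume v1: "vle V E v x1"
      have "\<not> E v x3" using le_not_adj[OF v1] F by blast
      then have "x3 \<notin> st V E v" using n3 by (auto simp: st_iff)
      moreover have "\<forall>u\<in>?S - st V E v. conn (V - st V E v) x3 u"
      proof -
        have c1: "conn (V - st V E v) x3 x2" using K(2) v1 by blast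
        show ?thesis using lemP[OF ab S v1 vS c1] by blast
      qed
      ultimately show ?thesis by blast
    next
      assume v2: "vle V E v x2"
      have "\<not> E v x3" using le_not_adj[OF v2] F by blast
      then have "x3 \<notin> st V E v" using n3 by (auto simp: st_iff)
      moreover have "\<forall>u\<in>?S - st V E v. conn (V - st V E v) x3 u"
      proof -
        have vS': "v \<notin> Gamma_S V E x2 x1 x3" using vS GS_swap by simp
        have c1: "conn (V - st V E v) x3 x1" using K(3) v2 by blast
        show ?thesis using lemP[OF ab SIL_swap[OF S] v2 vS' c1] GS_swap by simp
      qed
      ultimately show ?thesis by blast
    qed
  qed
  have TT: "w \<in> ?S" if v: "v \<in> ?S" and w: "w \<in> ?L" and vw: "vle V E v w" and ne: "v \<noteq> w" for v w
  proof (rule ccontr)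
    assume wS: "w \<notin> ?S"
    note K = key[OF fin S min w wS]
    obtain i where i: "i = x1 \<or> i = x2 \<or> i = x3" "v \<in> vclass V E i" using v unfolding Gamma_S_def by blast
    have iw: "vle V E i w" using vle_trans[OF _ vw] vclass_le[OF i(2)] by blast
    have wV: "w \<in> V" using vw unfolding vle_def by auto
    have nst: "t \<notin> st V E w" if "vle V E w a" "a = x1 \<or> a = x2 \<or> a = x3"
      "t = x1 \<or> t = x2 \<or> t = x3" "t \<noteq> a" for a t
    proof
      assume "t \<in> st V E w"
      moreover have "t \<noteq> w" using notin_GS[OF wS F(1-3)] that(3) by blast
      ultimately have "E w t" by (auto simp: st_iff)
      then have "t = a \<or> E a t" using vle_lk[OF that(1)] by blast
      then show False using that F by auto
    qed
    have nb: "\<not> vle V E x w" if "vle V E w x" "x = x1 \<or> x = x2 \<or> x = x3" for x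
      using not_back[OF wS that] .
    have "vle V E w x1 \<or> vle V E w x2" using w K(1) unfolding Gamma_le_S_def by blast
    then show False
    proof
      assume w1: "vle V E w x1"
      have c: "conn (V - st V E w) x3 x2" using K(2) w1 by blast
      show False using i(1)
      proof (elim disjE)
        assume "i = x1" then show False using nb[OF w1] iw by blast
      next
        assume "i = x2"
        then have "x2 = x3" using iso[OF _ nst[OF w1, of x2] conn_sym[OF c]] iw F by blast
        then show False using F by blast
      next
        assume "i = x3"
        then have "x3 = x2" using iso[OF _ nst[OF w1, of x3] c] iw F by blast
        then show False using F by blast
      qed
    next
      assume w2: "vle V E w x2"
      have c: "conn (V - st V E w) x3 x1" using K(3) w2 by blast
      show False using i(1)
      proof (elim disjE)
        assume "i = x2" then show False using nb[OF w2] iw by blast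
      next
        assume "i = x1"
        then have "x1 = x3" using iso[OF _ nst[OF w2, of x1] conn_sym[OF c]] iw F by blast
        then show False using F by blast
      next
        assume "i = x3"
        then have "x3 = x1" using iso[OF _ nst[OF w2, of x3] c] iw F by blast
        then show False using F by blast
      qed
    qed
  qed
  show ?thesis using S TT PP by blast
qed

end


locale sg = rg V E for V :: "'v set" and E +
  fixes x1 x2 x3 :: 'v
  assumes SIL: "SIL V E x1 x2 x3"
    and TT: "\<forall>v\<in>Gamma_S V E x1 x2 x3. \<forall>w\<in>Gamma_le_S V E x1 x2 x3. vle V E v w \<longrightarrow> v \<noteq> w \<longrightarrow> w \<in> Gamma_S V E x1 x2 x3"
    and PP: "\<forall>v\<in>Gamma_le_S V E x1 x2 x3 - Gamma_S V E x1 x2 x3. x3 \<notin> st V E v \<and>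
        (\<forall>u\<in>Gamma_S V E x1 x2 x3 - st V E v. conn (V - st V E v) x3 u)"
begin

abbreviation SS where "SS \<equiv> Gamma_S V E x1 x2 x3"
abbreviation LL where "LL \<equiv> Gamma_le_S V E x1 x2 x3"
abbreviation kap where "kap \<equiv> kill_outside LL"
abbreviation pih where "pih \<equiv> word_hom kap"

lemma SS_LL: "SS \<subseteq> LL"
  unfolding Gamma_S_def Gamma_le_S_def using vclass_le by blast
lemma LL_V: "LL \<subseteq> V" unfolding Gamma_le_S_def by auto
lemma SS_V: "SS \<subseteq> V" using SS_LL LL_V by blast

lemma LL_down: "vle V E v w \<Longrightarrow> w \<in> LL \<Longrightarrow> v \<in> LL"
  unfolding Gamma_le_S_def using vle_trans unfolding vle_def by blast

lemma kap_good: "good kap"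
  unfolding good_def
proof (intro conjI ballI allI impI)
  fix a assume "a \<in> V" then show "OV V (kap a)" by (simp add: kill_outside_def)
next
  fix a c assume e: "E a c"
  show "wcomm (kap a) (kap c)"
    using swap2[OF e, of True True] unfolding wcomm_def kill_outside_def by auto
qed

lemma pih_resp: "resp pih" using good_resp[OF kap_good] .

lemma pih_OV: "OV LL (pih w)"
  by (rule wh_OV[of UNIV]) (auto simp: kill_outside_def OV_def)

lemma pih_id: "OV LL w \<Longrightarrow> pih w = w"
  by (induction w) (auto simp: kill_outside_def)

lemma wh_R_letters:
  assumes "\<And>a. a \<in> U \<Longrightarrow> (r1 a, r2 a) \<in> R" "OV U x"
  shows "(word_hom r1 x, word_hom r2 x) \<in> R"
  using assms(2)
proof (induction x)
  case Nil then show ?case by simp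
next
  case (Cons p x)
  obtain a b where p: "p = (a, b)" by force
  have a: "(r1 a, r2 a) \<in> R" using assms(1) Cons.prems p by auto
  have "((if b then r1 a else inv_word (r1 a)), (if b then r2 a else inv_word (r2 a))) \<in> R"
    using a inv_R by auto
  then show ?case using R_cong Cons p by auto
qed

lemma conj_word:
  assumes c: "OV V c" and w: "OV V w"
  shows "(word_hom (\<lambda>u. c @ [(u, True)] @ inv_word c) w, c @ w @ inv_word c) \<in> R"
  using w
proof (induction w)
  case Nil then show ?case using R_sym[OF inv_r[OF c]] by simp
next
  case (Cons p w)
  obtain a b where p: "p = (a, b)" by force
  have aV: "a \<in> V" and wV: "OV V w" using Cons.prems p by auto
  have piece: "(if b then c @ [(a, True)] @ inv_word c else inv_word (c @ [(a, True)] @ inv_word c)) = c @ [(a, b)] @ inv_word c"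
    by (cases b) auto
  have "((c @ [(a, b)] @ inv_word c) @ word_hom (\<lambda>u. c @ [(u, True)] @ inv_word c) w,
         (c @ [(a, b)] @ inv_word c) @ (c @ w @ inv_word c)) \<in> R"
    using R_cong[OF R_refl Cons.IH[OF wV]] .
  moreover have "((c @ [(a, b)] @ inv_word c) @ (c @ w @ inv_word c), (c @ [(a, b)]) @ (inv_word c @ c) @ (w @ inv_word c)) \<in> R"
    by simp
  moreover have "((c @ [(a, b)]) @ (inv_word c @ c) @ (w @ inv_word c), (c @ [(a, b)]) @ [] @ (w @ inv_word c)) \<in> R"
    using R_ctx[OF inv_l[OF c]] .
  ultimately have "((c @ [(a, b)] @ inv_word c) @ word_hom (\<lambda>u. c @ [(u, True)] @ inv_word c) w,
        c @ ((a, b) # w) @ inv_word c) \<in> R" using R_trans by auto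
  then show ?case using p by (cases b) simp_all
qed

definition conjeq :: "('v word \<Rightarrow> 'v word) \<Rightarrow> 'v word \<Rightarrow> bool" where
  "conjeq f c \<longleftrightarrow> (\<forall>w. OV SS w \<longrightarrow> (\<exists>w'. OV SS w' \<and> (f w, c @ w' @ inv_word c) \<in> R)) \<and>
                   (\<forall>w'. OV SS w' \<longrightarrow> (\<exists>w. OV SS w \<and> (f w, c @ w' @ inv_word c) \<in> R))"

lemma h_conj:
  assumes c: "OV V c" and r: "\<And>u. u \<in> SS \<Longrightarrow> (\<rho> u, c @ [(u, True)] @ inv_word c) \<in> R"
  shows "conjeq (word_hom \<rho>) c"
proof -
  have "(word_hom \<rho> w, c @ w @ inv_word c) \<in> R" if w: "OV SS w" for w
  proof -
    have "(word_hom \<rho> w, word_hom (\<lambda>u. c @ [(u, True)] @ inv_word c) w) \<in> R"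
      using wh_R_letters[OF r w] .
    moreover have "OV V w" using OV_mono[OF w SS_V] .
    ultimately show ?thesis using conj_word[OF c] R_trans by blast
  qed
  then show ?thesis unfolding conjeq_def by blast
qed

lemma h_id:
  assumes r: "\<And>u. u \<in> SS \<Longrightarrow> (\<rho> u, [(u, True)]) \<in> R"
  shows "conjeq (word_hom \<rho>) []"
  using h_conj[of "[]" \<rho>] r by simp

lemma h_inv:
  assumes o: "\<And>u. u \<in> SS \<Longrightarrow> OV SS (\<rho> u)" and o': "\<And>u. u \<in> SS \<Longrightarrow> OV SS (\<rho>' u)"
    and r: "\<And>u. u \<in> SS \<Longrightarrow> (word_hom \<rho> (\<rho>' u), [(u, True)]) \<in> R"
  shows "conjeq (word_hom \<rho>) []"
  unfolding conjeq_def
proof (intro conjI allI impI)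
  fix w assume w: "OV SS w"
  then show "\<exists>w'. OV SS w' \<and> (word_hom \<rho> w, [] @ w' @ inv_word []) \<in> R"
    using wh_OV[of SS SS \<rho>, OF o w] by auto
next
  fix w' assume w': "OV SS w'"
  have "(word_hom (\<lambda>u. word_hom \<rho> (\<rho>' u)) w', word_hom id_subst w') \<in> R"
    using wh_R_letters[OF _ w', of "\<lambda>u. word_hom \<rho> (\<rho>' u)" id_subst] r by (simp add: id_subst_def)
  then have "(word_hom \<rho> (word_hom \<rho>' w'), w') \<in> R" by (simp add: wh_comp)
  then show "\<exists>w. OV SS w \<and> (word_hom \<rho> w, [] @ w' @ inv_word []) \<in> R"
    using wh_OV[of SS SS \<rho>', OF o' w'] by auto
qed

lemma conjeq_R:
  assumes "conjeq f c" "\<And>w. OV SS w \<Longrightarrow> (h w, f w) \<in> R"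
  shows "conjeq h c"
  using assms unfolding conjeq_def by (meson R_trans)

lemma conjeq_comp:
  assumes f: "conjeq f c" and g: "conjeq (word_hom \<rho>) c1" and rg: "resp (word_hom \<rho>)"
  shows "conjeq (\<lambda>w. word_hom \<rho> (f w)) (word_hom \<rho> c @ c1)"
proof -
  let ?g = "word_hom \<rho>" let ?C = "?g c @ c1"
  have key: "(?g (f w), ?C @ w'' @ inv_word ?C) \<in> R"
    if fw: "(f w, c @ w' @ inv_word c) \<in> R" and gw: "(?g w', c1 @ w'' @ inv_word c1) \<in> R" for w w' w''
  proof -
    have 1: "(?g (f w), ?g (c @ w' @ inv_word c)) \<in> R" using rg fw unfolding resp_def by blast
    have 2: "(?g (c @ w' @ inv_word c), ?g c @ (c1 @ w'' @ inv_word c1) @ inv_word (?g c)) \<in> R"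
      using R_ctx[OF gw, of "?g c" "inv_word (?g c)"] by simp
    show ?thesis using R_trans[OF 1 2] by simp
  qed
  show ?thesis unfolding conjeq_def
  proof (intro conjI allI impI)
    fix w assume w: "OV SS w"
    obtain w' where w': "OV SS w'" "(f w, c @ w' @ inv_word c) \<in> R" using f w unfolding conjeq_def by blast
    obtain w'' where w'': "OV SS w''" "(?g w', c1 @ w'' @ inv_word c1) \<in> R" using g w' unfolding conjeq_def by blast
    show "\<exists>w'. OV SS w' \<and> (?g (f w), ?C @ w' @ inv_word ?C) \<in> R" using key[OF w'(2) w''(2)] w'' by blast
  next
    fix w'' assume w'': "OV SS w''"
    obtain w' where w': "OV SS w'" "(?g w', c1 @ w'' @ inv_word c1) \<in> R" using g w'' unfolding conjeq_def by blast
    obtain w where w: "OV SS w" "(f w, c @ w' @ inv_word c) \<in> R" using f w' unfolding conjeq_def by blast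
    show "\<exists>w. OV SS w \<and> (?g (f w), ?C @ w'' @ inv_word ?C) \<in> R" using key[OF w(2) w'(2)] w by blast
  qed
qed

end

context sg begin

lemma wcomm_conj:
  assumes "wcomm x y" "OV V z"
  shows "wcomm (z @ x @ inv_word z) (z @ y @ inv_word z)"
proof -
  let ?i = "inv_word z"
  have 1: "(z @ x @ ?i @ z @ y @ ?i, z @ x @ y @ ?i) \<in> R"
    using R_ctx[OF inv_l[OF assms(2)], of "z @ x" "y @ ?i"] by simp
  have 2: "(z @ x @ y @ ?i, z @ y @ x @ ?i) \<in> R"
    using R_ctx[OF assms(1)[unfolded wcomm_def], of z ?i] by simp
  have 3: "(z @ y @ x @ ?i, z @ y @ ?i @ z @ x @ ?i) \<in> R"
    using R_ctx[OF R_sym[OF inv_l[OF assms(2)]], of "z @ y" "x @ ?i"] by simp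
  show ?thesis unfolding wcomm_def using R_trans[OF R_trans[OF 1 2] 3] by simp
qed

lemma transvection_E:
  assumes "transvection V E \<sigma>"
  obtains v w e where "vle V E v w" "v \<noteq> w"
    "\<sigma> = id_subst(v := [(w, e), (v, True)]) \<or> \<sigma> = id_subst(v := [(v, True), (w, e)])"
  using assms unfolding transvection_def by blast

lemma pc_E:
  assumes "partial_conjugation V E \<sigma>"
  obtains v C e where "v \<in> V" "C \<subseteq> V - st V E v" "\<forall>p\<in>C. \<forall>q\<in>V - st V E v. E p q \<longrightarrow> q \<in> C"
    "\<sigma> = (\<lambda>u. if u \<in> C then [(v, e), (u, True), (v, \<not> e)] else [(u, True)])"
  using assms unfolding partial_conjugation_def by blast

lemma gen_good:
  assumes "transvection V E \<sigma> \<or> partial_conjugation V E \<sigma>"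
  shows "good \<sigma>"
  using assms
proof
  assume "transvection V E \<sigma>"
  then obtain v w e where vw: "vle V E v w" "v \<noteq> w"
    and s: "\<sigma> = id_subst(v := [(w, e), (v, True)]) \<or> \<sigma> = id_subst(v := [(v, True), (w, e)])"
    by (rule transvection_E)
  have V: "v \<in> V" "w \<in> V" using vw unfolding vle_def by auto
  have sv: "set (\<sigma> v) = {(w, e), (v, True)}" using s by auto
  have so: "\<sigma> a = [(a, True)]" if "a \<noteq> v" for a using s that by (auto simp: id_subst_def)
  have cvc: "wcomm (\<sigma> v) [(c, True)]" if e: "E v c" for c
  proof -
    have "c = w \<or> E w c" using vle_lk[OF vw(1) e] .
    then have "cv w c" "cv v c" using V E_V[OF e] e unfolding cv_def by auto
    then have "wcv (\<sigma> v) [(c, True)]" unfolding wcv_def using sv by auto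
    then show ?thesis using comm_words unfolding wcomm_def by blast
  qed
  show "good \<sigma>" unfolding good_def
  proof (intro conjI ballI allI impI)
    fix a assume "a \<in> V" then show "OV V (\<sigma> a)" using s V by (auto simp: id_subst_def)
  next
    fix a c assume e: "E a c"
    have ac: "a \<noteq> c" using e E_irr by blast
    show "wcomm (\<sigma> a) (\<sigma> c)"
    proof (cases "a = v")
      case True then show ?thesis using cvc e ac so by auto
    next
      case False
      show ?thesis
      proof (cases "c = v")
        case True then show ?thesis using cvc[of a] E_sym[OF e] False so wcomm_sym by auto
      next
        case False2: False
        then show ?thesis using so False swap2[OF e] unfolding wcomm_def by auto
      qed
    qed
  qed
next
  assume "partial_conjugation V E \<sigma>"
  then obtain v C e where v: "v \<in> V" and C: "C \<subseteq> V - st V E v" and cl: "\<forall>p\<in>C. \<forall>q\<in>V - st V E v. E p q \<longrightarrow> q \<in> C"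
    and s: "\<sigma> = (\<lambda>u. if u \<in> C then [(v, e), (u, True), (v, \<not> e)] else [(u, True)])"
    by (rule pc_E)
  have one: "wcomm (\<sigma> a) [(c, True)]" if e: "E a c" and a: "a \<in> C" and c: "c \<notin> C" for a c
  proof -
    have "c \<in> st V E v" using cl a c e E_V by blast
    then have "c = v \<or> E v c" by (auto simp: st_iff)
    then have "cv v c" "cv a c" using v E_V[OF e] e unfolding cv_def by auto
    then have "wcv (\<sigma> a) [(c, True)]" unfolding wcv_def using a s by auto
    then show ?thesis using comm_words unfolding wcomm_def by blast
  qed
  show "good \<sigma>" unfolding good_def
  proof (intro conjI ballI allI impI)
    fix a assume "a \<in> V" then show "OV V (\<sigma> a)" using s v by auto
  next
    fix a c assume e: "E a c"
    show "wcomm (\<sigma> a) (\<sigma> c)"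
    proof (cases "a \<in> C")
      case True
      show ?thesis
      proof (cases "c \<in> C")
        case True2: True
        have "wcomm [(a, True)] [(c, True)]" using swap2[OF e] unfolding wcomm_def by simp
        from wcomm_conj[OF this, of "[(v, e)]"] v show ?thesis using s True True2 by simp
      next
        case False
        then show ?thesis using one[OF e True False] s by simp
      qed
    next
      case False
      show ?thesis
      proof (cases "c \<in> C")
        case True2: True
        have "wcomm (\<sigma> c) [(a, True)]" using one[OF E_sym[OF e] True2 False] .
        then have "wcomm [(a, True)] (\<sigma> c)" by (rule wcomm_sym)
        then show ?thesis using s False by simp
      next
        case False2: False
        then show ?thesis using False s swap2[OF e] unfolding wcomm_def by simp
      qed
    qed
  qed
qed

end

context sg begin

lemma gen_kill:
  assumes gen: "transvection V E \<sigma> \<or> partial_conjugation V E \<sigma>" and x: "OV V x"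
  shows "(pih (word_hom \<sigma> x), pih (word_hom \<sigma> (pih x))) \<in> R"
proof -
  have lt: "(pih (\<sigma> a), pih (word_hom \<sigma> (kap a))) \<in> R" if a: "a \<in> V" for a
  proof (cases "a \<in> LL")
    case True then show ?thesis by (simp add: kill_outside_def)
  next
    case False
    have "(pih (\<sigma> a), []) \<in> R" using gen
    proof
      assume "transvection V E \<sigma>"
      then obtain v w e where vw: "vle V E v w" "v \<noteq> w"
        and s: "\<sigma> = id_subst(v := [(w, e), (v, True)]) \<or> \<sigma> = id_subst(v := [(v, True), (w, e)])"
        by (rule transvection_E)
      show ?thesis
      proof (cases "a = v")
        case True
        have "w \<notin> LL" using LL_down vw(1) False True by blast
        then show ?thesis using s True False by (cases e) (auto simp: kill_outside_def)
      next
        case False2: False then show ?thesis using s False by (auto simp: id_subst_def kill_outside_def)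
      qed
    next
      assume "partial_conjugation V E \<sigma>"
      then obtain v C e where v: "v \<in> V"
        and s: "\<sigma> = (\<lambda>u. if u \<in> C then [(v, e), (u, True), (v, \<not> e)] else [(u, True)])"
        by (rule pc_E)
      show ?thesis
      proof (cases "a \<in> C")
        case False2: False then show ?thesis using s False by (simp add: kill_outside_def)
      next
        case True
        show ?thesis
        proof (cases "v \<in> LL")
          case True2: True
          have "pih (\<sigma> a) = [(v, e), (v, \<not> e)]" using s True True2 False
            by (cases e) (simp_all add: kill_outside_def)
          then show ?thesis using cancel2[OF v] by simp
        next
          case False2: False then show ?thesis using s True False by (cases e) (simp_all add: kill_outside_def)
        qed
      qed
    qed
    moreover have "pih (word_hom \<sigma> (kap a)) = []" using False by (simp add: kill_outside_def)
    ultimately show ?thesis by simp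
  qed
  have "(word_hom (\<lambda>a. pih (\<sigma> a)) x, word_hom (\<lambda>a. pih (word_hom \<sigma> (kap a))) x) \<in> R"
    using wh_R_letters[OF lt x] .
  then show ?thesis by (simp add: wh_comp)
qed

lemma pc_closed:
  assumes cl: "\<forall>p\<in>C. \<forall>q\<in>V - st V E v. E p q \<longrightarrow> q \<in> C"
    and c: "conn (V - st V E v) a b" and a: "a \<in> C"
  shows "b \<in> C"
  using conn_closed[OF c a] cl by blast

lemma SS_notin_st_ne: "v \<notin> SS \<Longrightarrow> u \<in> SS \<Longrightarrow> u \<noteq> v" by auto

lemma gen_conj:
  assumes gen: "transvection V E \<sigma> \<or> partial_conjugation V E \<sigma>"
  shows "\<exists>c. OV LL c \<and> conjeq (word_hom (\<lambda>u. pih (\<sigma> u))) c"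
  using gen
proof
  assume "transvection V E \<sigma>"
  then obtain v w e where vw: "vle V E v w" "v \<noteq> w"
    and s: "\<sigma> = id_subst(v := [(w, e), (v, True)]) \<or> \<sigma> = id_subst(v := [(v, True), (w, e)])"
    by (rule transvection_E)
  have V: "v \<in> V" "w \<in> V" using vw unfolding vle_def by auto
  let ?r = "\<lambda>u. pih (\<sigma> u)"
  have so: "?r u = [(u, True)]" if "u \<noteq> v" "u \<in> LL" for u
    using s that by (auto simp: id_subst_def kill_outside_def)
  show ?thesis
  proof (cases "v \<in> SS")
    case False
    have "(?r u, [(u, True)]) \<in> R" if u: "u \<in> SS" for u
    proof -
      have "u \<noteq> v" using u False by blast
      moreover have "u \<in> LL" using u SS_LL by blast
      ultimately show ?thesis using so by simp
    qed
    then have "conjeq (word_hom ?r) []" by (rule h_id)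
    then show ?thesis by (intro exI[of _ "[]"]) simp
  next
    case True
    have vL: "v \<in> LL" using True SS_LL by blast
    show ?thesis
    proof (cases "w \<in> LL")
      case False
      have "?r v = [(v, True)]" using s vL False by (cases e) (auto simp: kill_outside_def)
      then have "(?r u, [(u, True)]) \<in> R" if u: "u \<in> SS" for u
      proof (cases "u = v")
        case True then show ?thesis using \<open>?r v = [(v, True)]\<close> by simp
      next
        case False
        moreover have "u \<in> LL" using u SS_LL by blast
        ultimately show ?thesis using so by simp
      qed
      then have "conjeq (word_hom ?r) []" by (rule h_id)
      then show ?thesis by (intro exI[of _ "[]"]) simp
    next
      case wL: True
      have wS: "w \<in> SS" using TT True wL vw by blast
      have rw: "?r w = [(w, True)]" using so vw(2) wL by auto
      from s show ?thesis
      proof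
        assume s1: "\<sigma> = id_subst(v := [(w, e), (v, True)])"
        let ?r' = "id_subst(v := [(w, \<not> e), (v, True)])"
        have rv: "?r v = [(w, e), (v, True)]" using s1 vL wL by (cases e) (auto simp: kill_outside_def)
        have "conjeq (word_hom ?r) []"
        proof (rule h_inv[of _ ?r'])
          fix u assume u: "u \<in> SS"
          show "OV SS (?r u)" using rv so[of u] u wS SS_LL by (cases "u = v") auto
          show "OV SS (?r' u)" using u wS True by (auto simp: id_subst_def)
          show "(word_hom ?r (?r' u), [(u, True)]) \<in> R"
          proof (cases "u = v")
            case True
            have "word_hom ?r (?r' u) = [(w, \<not> e), (w, \<not> \<not> e)] @ [(v, True)]"
              using True rw rv vw(2) by (cases e) (simp_all add: id_subst_def)
            then show ?thesis using R_ctx[OF cancel2[OF V(2), of "\<not> e"], of "[]" "[(v, True)]"] True by simp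
          next
            case False
            then show ?thesis using so[of u] u SS_LL by (auto simp: id_subst_def)
          qed
        qed
        then show ?thesis by (intro exI[of _ "[]"]) simp
      next
        assume s1: "\<sigma> = id_subst(v := [(v, True), (w, e)])"
        let ?r' = "id_subst(v := [(v, True), (w, \<not> e)])"
        have rv: "?r v = [(v, True), (w, e)]" using s1 vL wL by (cases e) (auto simp: kill_outside_def)
        have "conjeq (word_hom ?r) []"
        proof (rule h_inv[of _ ?r'])
          fix u assume u: "u \<in> SS"
          show "OV SS (?r u)" using rv so[of u] u wS SS_LL by (cases "u = v") auto
          show "OV SS (?r' u)" using u wS True by (auto simp: id_subst_def)
          show "(word_hom ?r (?r' u), [(u, True)]) \<in> R"
          proof (cases "u = v")
            case True
            have "word_hom ?r (?r' u) = [(v, True)] @ [(w, e), (w, \<not> e)] @ []"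
              using True rw rv vw(2) by (cases e) (simp_all add: id_subst_def)
            then show ?thesis using R_ctx[OF cancel2[OF V(2), of e], of "[(v, True)]" "[]"] True by simp
          next
            case False
            then show ?thesis using so[of u] u SS_LL by (auto simp: id_subst_def)
          qed
        qed
        then show ?thesis by (intro exI[of _ "[]"]) simp
      qed
    qed
  qed
next
  assume "partial_conjugation V E \<sigma>"
  then obtain v C e where v: "v \<in> V" and C: "C \<subseteq> V - st V E v" and cl: "\<forall>p\<in>C. \<forall>q\<in>V - st V E v. E p q \<longrightarrow> q \<in> C"
    and s: "\<sigma> = (\<lambda>u. if u \<in> C then [(v, e), (u, True), (v, \<not> e)] else [(u, True)])"
    by (rule pc_E)
  let ?r = "\<lambda>u. pih (\<sigma> u)"
  have vC: "v \<notin> C" using C by (auto simp: st_iff)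
  have so: "?r u = [(u, True)]" if "u \<notin> C" "u \<in> LL" for u
    using s that by (auto simp: kill_outside_def)
  show ?thesis
  proof (cases "v \<in> LL")
    case False
    have "?r u = [(u, True)]" if "u \<in> SS" for u
      using s that SS_LL False by (cases e) (auto simp: kill_outside_def)
    then have "conjeq (word_hom ?r) []" by (intro h_id) auto
    then show ?thesis by (intro exI[of _ "[]"]) simp
  next
    case vL: True
    have sc: "?r u = [(v, e), (u, True), (v, \<not> e)]" if "u \<in> C" "u \<in> LL" for u
      using s that vL by (cases e) (auto simp: kill_outside_def)
    show ?thesis
    proof (cases "v \<in> SS")
      case True
      let ?r' = "\<lambda>u. if u \<in> C then [(v, \<not> e), (u, True), (v, e)] else [(u, True)]"
      have rv: "?r v = [(v, True)]" using so vC vL by blast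
      have "conjeq (word_hom ?r) []"
      proof (rule h_inv[of _ ?r'])
        fix u assume u: "u \<in> SS"
        show "OV SS (?r u)" using sc[of u] so[of u] u True SS_LL by (cases "u \<in> C") auto
        show "OV SS (?r' u)" using u True by auto
        show "(word_hom ?r (?r' u), [(u, True)]) \<in> R"
        proof (cases "u \<in> C")
          case True
          have "word_hom ?r (?r' u) = [(v, \<not> e), (v, \<not> \<not> e)] @ [(u, True)] @ [(v, \<not> e), (v, \<not> \<not> e)]"
            using True rv sc[of u] u SS_LL by (cases e) auto
          then show ?thesis using R_cong3[OF cancel2[OF v, of "\<not> e"] R_refl[of "[(u, True)]"] cancel2[OF v, of "\<not> e"]] by simp
        next
          case False
          then show ?thesis using so[of u] u SS_LL by auto
        qed
      qed
      then show ?thesis by (intro exI[of _ "[]"]) simp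
    next
      case False
      have P: "x3 \<notin> st V E v" "\<forall>u\<in>SS - st V E v. conn (V - st V E v) x3 u" using PP vL False by auto
      show ?thesis
      proof (cases "x3 \<in> C")
        case True
        have "conjeq (word_hom ?r) [(v, e)]"
        proof (rule h_conj)
          show "OV V [(v, e)]" using v by simp
          fix u assume u: "u \<in> SS"
          show "(?r u, [(v, e)] @ [(u, True)] @ inv_word [(v, e)]) \<in> R"
          proof (cases "u \<in> C")
            case True then show ?thesis using sc[of u] u SS_LL by auto
          next
            case uC: False
            have "u \<in> st V E v"
            proof (rule ccontr)
              assume "u \<notin> st V E v"
              then have "conn (V - st V E v) x3 u" using P u by blast
              then show False using pc_closed[OF cl _ True] uC by blast
            qed
            moreover have "u \<noteq> v" using u False by blast
            ultimately have vu: "E v u" by (auto simp: st_iff)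
            have 1: "([(v, e), (u, True), (v, \<not> e)], [(u, True), (v, e), (v, \<not> e)]) \<in> R"
              using R_ctx[OF swap2[OF vu, of e True], of "[]" "[(v, \<not> e)]"] by simp
            have 2: "([(u, True), (v, e), (v, \<not> e)], [(u, True)]) \<in> R"
              using R_ctx[OF cancel2[OF v, of e], of "[(u, True)]" "[]"] by simp
            have "([(u, True)], [(v, e), (u, True), (v, \<not> e)]) \<in> R" using R_sym[OF R_trans[OF 1 2]] .
            then show ?thesis using so[of u] uC u SS_LL by auto
          qed
        qed
        moreover have "OV LL [(v, e)]" using vL by simp
        ultimately show ?thesis by blast
      next
        case x3C: False
        have "?r u = [(u, True)]" if u: "u \<in> SS" for u
        proof -
          have "u \<notin> C"
          proof
            assume uC: "u \<in> C"
            then have "u \<notin> st V E v" using C by blast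
            then have "conn (V - st V E v) u x3" using P u conn_sym by blast
            then show False using pc_closed[OF cl _ uC] x3C by blast
          qed
          then show ?thesis using so u SS_LL by blast
        qed
        then have "conjeq (word_hom ?r) []" by (intro h_id) auto
        then show ?thesis by (intro exI[of _ "[]"]) simp
      qed
    qed
  qed
qed

end

context sg begin

lemma out0_inv:
  assumes "\<tau> \<in> out0_subst V E"
  shows "resp (word_hom \<tau>) \<and> (\<forall>a\<in>V. OV V (\<tau> a)) \<and> (\<exists>c. OV LL c \<and> conjeq (\<lambda>w. pih (word_hom \<tau> w)) c)"
  using assms
proof (induction rule: out0_subst.induct)
  case idI
  have "resp (word_hom id_subst)" unfolding resp_def by simp
  moreover have "\<forall>a\<in>V. OV V (id_subst a)" by (simp add: id_subst_def)
  moreover have "conjeq (\<lambda>w. pih (word_hom id_subst w)) []"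
  proof -
    have "(kap u, [(u, True)]) \<in> R" if "u \<in> SS" for u using that SS_LL by (auto simp: kill_outside_def)
    then have "conjeq (word_hom kap) []" by (rule h_id)
    then show ?thesis by simp
  qed
  moreover have "OV LL []" by simp
  ultimately show ?case by blast
next
  case (genI \<tau> \<sigma>)
  from genI.IH obtain c where r: "resp (word_hom \<tau>)" and o: "\<forall>a\<in>V. OV V (\<tau> a)"
    and c: "OV LL c" "conjeq (\<lambda>w. pih (word_hom \<tau> w)) c" by blast
  have gen: "transvection V E \<sigma> \<or> partial_conjugation V E \<sigma>" using genI by blast
  have gs: "good \<sigma>" using gen_good[OF gen] .
  have rs: "resp (word_hom \<sigma>)" using good_resp[OF gs] .
  have os: "\<And>a. a \<in> V \<Longrightarrow> OV V (\<sigma> a)" using gs unfolding good_def by blast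
  obtain c1 where c1: "OV LL c1" "conjeq (word_hom (\<lambda>u. pih (\<sigma> u))) c1" using gen_conj[OF gen] by blast
  let ?t = "\<lambda>u. word_hom \<sigma> (\<tau> u)"
  let ?g = "word_hom (\<lambda>u. pih (\<sigma> u))"
  have wt: "word_hom ?t w = word_hom \<sigma> (word_hom \<tau> w)" for w by (rule wh_comp)
  have wg: "?g w = pih (word_hom \<sigma> w)" for w by (rule wh_comp)
  have "resp (word_hom ?t)" using r rs unfolding resp_def wt by blast
  moreover have "\<forall>a\<in>V. OV V (?t a)" using o wh_OV[of V V \<sigma>, OF os] by blast
  moreover have "resp ?g" using rs pih_resp unfolding resp_def wg by blast
  then have cc: "conjeq (\<lambda>w. ?g (pih (word_hom \<tau> w))) (?g c @ c1)"
    using conjeq_comp[OF c(2) c1(2)] by blast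
  have "conjeq (\<lambda>w. pih (word_hom ?t w)) (?g c @ c1)"
  proof (rule conjeq_R[OF cc])
    fix w assume w: "OV SS w"
    have "OV V (word_hom \<tau> w)" using wh_OV[of V V \<tau>] o OV_mono[OF w SS_V] by blast
    from gen_kill[OF gen this]
    show "(pih (word_hom ?t w), ?g (pih (word_hom \<tau> w))) \<in> R" unfolding wt wg .
  qed
  moreover have "OV LL (?g c @ c1)" using c1(1) pih_OV unfolding wg by simp
  ultimately show ?case by blast
qed

lemma special:
  assumes ab: "\<forall>u\<in>V. abelian_set E (vclass V E u)"
  shows "special_SIL V E x1 x2 x3"
proof -
  note F = SIL_facts[OF SIL]
  have H: "special_subgroup V E SS = {cls w | w. OV SS w}"
    unfolding special_subgroup_def using generate_char[OF SS_V] .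
  have L: "special_subgroup V E LL = {cls w | w. OV LL w}"
    unfolding special_subgroup_def using generate_char[OF LL_V] .
  have main: "\<exists>g\<in>special_subgroup V E LL.
      (\<lambda>h. hom_of V E kap (hom_of V E \<tau> h)) ` special_subgroup V E SS =
      {g \<otimes>\<^bsub>G\<^esub> h \<otimes>\<^bsub>G\<^esub> inv\<^bsub>G\<^esub> g | h. h \<in> special_subgroup V E SS}"
    if t: "\<tau> \<in> out0_subst V E" for \<tau>
  proof -
    obtain c where r: "resp (word_hom \<tau>)" and c: "OV LL c" "conjeq (\<lambda>w. pih (word_hom \<tau> w)) c"
      using out0_inv[OF t] by blast
    have cV: "OV V c" using OV_mono[OF c(1) LL_V] .
    have img: "hom_of V E kap (hom_of V E \<tau> (cls w)) = cls (pih (word_hom \<tau> w))" for w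
      using hom_of_cls[OF r] hom_of_cls[OF pih_resp] by simp
    have cj: "cls c \<otimes>\<^bsub>G\<^esub> cls w \<otimes>\<^bsub>G\<^esub> inv\<^bsub>G\<^esub> (cls c) = cls (c @ w @ inv_word c)" for w
      using inv_cls[OF cV] mult_cls by simp
    have "(\<lambda>h. hom_of V E kap (hom_of V E \<tau> h)) ` {cls w | w. OV SS w} =
          {cls c \<otimes>\<^bsub>G\<^esub> h \<otimes>\<^bsub>G\<^esub> inv\<^bsub>G\<^esub> (cls c) | h. h \<in> {cls w | w. OV SS w}}"
    proof (rule equalityI; rule subsetI)
      fix x assume "x \<in> (\<lambda>h. hom_of V E kap (hom_of V E \<tau> h)) ` {cls w | w. OV SS w}"
      then obtain h where h: "h \<in> {cls w | w. OV SS w}" "x = hom_of V E kap (hom_of V E \<tau> h)" by blast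
      then obtain w where w0: "OV SS w" "h = cls w" by blast
      have w: "OV SS w" "x = cls (pih (word_hom \<tau> w))" using w0 h(2) img by auto
      obtain w' where w': "OV SS w'" "(pih (word_hom \<tau> w), c @ w' @ inv_word c) \<in> R"
        using c(2) w(1) unfolding conjeq_def by blast
      have "x = cls c \<otimes>\<^bsub>G\<^esub> cls w' \<otimes>\<^bsub>G\<^esub> inv\<^bsub>G\<^esub> (cls c)" using w(2) w'(2) cj cls_eq by simp
      then show "x \<in> {cls c \<otimes>\<^bsub>G\<^esub> h \<otimes>\<^bsub>G\<^esub> inv\<^bsub>G\<^esub> (cls c) | h. h \<in> {cls w | w. OV SS w}}"
        using w'(1) by blast
    next
      fix x assume "x \<in> {cls c \<otimes>\<^bsub>G\<^esub> h \<otimes>\<^bsub>G\<^esub> inv\<^bsub>G\<^esub> (cls c) | h. h \<in> {cls w | w. OV SS w}}"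
      then obtain w' where w': "OV SS w'" "x = cls (c @ w' @ inv_word c)" using cj by auto
      obtain w where w: "OV SS w" "(pih (word_hom \<tau> w), c @ w' @ inv_word c) \<in> R"
        using c(2) w'(1) unfolding conjeq_def by blast
      have "cls (pih (word_hom \<tau> w)) = cls (c @ w' @ inv_word c)" using w(2) cls_eq by blast
      then have "x = hom_of V E kap (hom_of V E \<tau> (cls w))" using img w'(2) by simp
      then show "x \<in> (\<lambda>h. hom_of V E kap (hom_of V E \<tau> h)) ` {cls w | w. OV SS w}"
        using w(1) by blast
    qed
    moreover have "cls c \<in> special_subgroup V E LL" using L c(1) by blast
    ultimately show ?thesis unfolding H by blast
  qed
  have abx: "abelian_set E (vclass V E x1)" "abelian_set E (vclass V E x2)" "abelian_set E (vclass V E x3)"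
    using ab F by auto
  show ?thesis unfolding special_SIL_def Let_def using SIL abx main by blast
qed

end

theorem proposition3p9:
  fixes V :: "'v set" and E :: "'v \<Rightarrow> 'v \<Rightarrow> bool"
  assumes "finite V" and "simplicial_graph V E"
    and "\<forall>u\<in>V. abelian_set E (vclass V E u)"
    and "\<exists>x y z. SIL V E x y z"
  shows "\<exists>x y z. special_SIL V E x y z"
proof -
  interpret rg V E using assms(2) by unfold_locales
  obtain x1 x2 x3 where S: "SIL V E x1 x2 x3"
    and T: "\<forall>v\<in>Gamma_S V E x1 x2 x3. \<forall>w\<in>Gamma_le_S V E x1 x2 x3. vle V E v w \<longrightarrow> v \<noteq> w \<longrightarrow> w \<in> Gamma_S V E x1 x2 x3"
    and P: "\<forall>v\<in>Gamma_le_S V E x1 x2 x3 - Gamma_S V E x1 x2 x3. x3 \<notin> st V E v \<and>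
        (\<forall>u\<in>Gamma_S V E x1 x2 x3 - st V E v. conn_in E (V - st V E v) x3 u)"
    using good_SIL[OF assms(1) assms(3) assms(4)] by blast
  interpret sg V E x1 x2 x3 using S T P by unfold_locales
  show ?thesis using special[OF assms(3)] by blast
qed


end
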